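(* Let $D$ be a tournament missing disjoint paths of length 2 and let $C$ be a double cycle in $\Delta(D)$. Then $K(C)$ is an interval of $D$, i.e. for all $u,v\in K(C)$ we have $N^+(u)\setminus K(C)=N^+(v)\setminus K(C)$ and $N^-(u)\setminus K(C)=N^-(v)\setminus K(C)$.
   Context: All digraphs are finite oriented graphs; $N^+(v)$, $N^-(v)$ are out- and in-neighborhoods in $D$, and $N^{++}(v)$ is the set of vertices $w\notin N^+(v)\cup\{v\}$ with $u\to w$ for some $u\in N^+(v)$. A missing edge is a pair of distinct non-adjacent vertices; the missing graph is formed by the missing edges. $D$ is a tournament missing disjoint paths of length 2 if its missing graph is a vertex-disjoint union of paths each with exactly two edges. For missing edges $\{x,y\},\{a,b\}$, $\{x,y\}$ loses to $\{a,b\}$ (written $xy\to ab$) if the endpoints can be labelled so that $x\to a$, $b\notin N^+(x)\cup N^{++}(x)$, $y\to b$, $a\notin N^+(y)\cup N^{++}(y)$. $\Delta(D)$ has the missing edges as vertices and arcs $(e,e')$ whenever $e$ loses to $e'$. For missing paths $abc$, $xyz$ (edges $ab,bc$ and $xy,yz$), $abc\to xyz$ means each of $ab,bc$ loses to each of $xy,yz$. A double cycle is a sequence $C=a_1b_1c_1,\dots,a_kb_kc_k$ ($k\ge2$) of distinct missing paths of length 2 (components of the missing graph) with $a_ib_ic_i\to a_{i+1}b_{i+1}c_{i+1}$ for all $i$, indices modulo $k$. $K(C)=\{a_i,b_i,c_i: 1\le i\le k\}$. *)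

theory Defs
  imports Main
begin

definition oriented_graph :: "'a set \<Rightarrow> ('a \<Rightarrow> 'a \<Rightarrow> bool) \<Rightarrow> bool" where
  "oriented_graph V arc \<longleftrightarrow> finite V \<and>
     (\<forall>u v. arc u v \<longrightarrow> u \<in> V \<and> v \<in> V) \<and>
     (\<forall>u. \<not> arc u u) \<and> (\<forall>u v. arc u v \<longrightarrow> \<not> arc v u)"

definition outN :: "'a set \<Rightarrow> ('a \<Rightarrow> 'a \<Rightarrow> bool) \<Rightarrow> 'a \<Rightarrow> 'a set" where
  "outN V arc v = {w \<in> V. arc v w}"

definition inN :: "'a set \<Rightarrow> ('a \<Rightarrow> 'a \<Rightarrow> bool) \<Rightarrow> 'a \<Rightarrow> 'a set" where
  "inN V arc v = {w \<in> V. arc w v}"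

definition outN2 :: "'a set \<Rightarrow> ('a \<Rightarrow> 'a \<Rightarrow> bool) \<Rightarrow> 'a \<Rightarrow> 'a set" where
  "outN2 V arc v = {w \<in> V. w \<notin> outN V arc v \<and> w \<noteq> v \<and> (\<exists>u \<in> outN V arc v. arc u w)}"

definition missing :: "'a set \<Rightarrow> ('a \<Rightarrow> 'a \<Rightarrow> bool) \<Rightarrow> 'a \<Rightarrow> 'a \<Rightarrow> bool" where
  "missing V arc x y \<longleftrightarrow> x \<in> V \<and> y \<in> V \<and> x \<noteq> y \<and> \<not> arc x y \<and> \<not> arc y x"

text \<open>a b c is a component of the missing graph which is a path with exactly the two edges ab, bc.\<close>
definition missing_path :: "'a set \<Rightarrow> ('a \<Rightarrow> 'a \<Rightarrow> bool) \<Rightarrow> 'a \<Rightarrow> 'a \<Rightarrow> 'a \<Rightarrow> bool" where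
  "missing_path V arc a b c \<longleftrightarrow> a \<noteq> c \<and> missing V arc a b \<and> missing V arc b c \<and>
     (\<forall>w. missing V arc a w \<longrightarrow> w = b) \<and>
     (\<forall>w. missing V arc c w \<longrightarrow> w = b) \<and>
     (\<forall>w. missing V arc b w \<longrightarrow> w = a \<or> w = c)"

text \<open>D is a tournament missing disjoint paths of length 2: the missing graph is a
  vertex-disjoint union of paths with exactly two edges, i.e. every missing edge
  lies in such a component.\<close>
definition tournament_missing_P2 :: "'a set \<Rightarrow> ('a \<Rightarrow> 'a \<Rightarrow> bool) \<Rightarrow> bool" where
  "tournament_missing_P2 V arc \<longleftrightarrow> oriented_graph V arc \<and>
     (\<forall>x y. missing V arc x y \<longrightarrow>
        (\<exists>a b c. missing_path V arc a b c \<and> ({x, y} = {a, b} \<or> {x, y} = {b, c})))"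

definition loses :: "'a set \<Rightarrow> ('a \<Rightarrow> 'a \<Rightarrow> bool) \<Rightarrow> 'a set \<Rightarrow> 'a set \<Rightarrow> bool" where
  "loses V arc e f \<longleftrightarrow> (\<exists>x y a b. e = {x, y} \<and> f = {a, b} \<and>
     arc x a \<and> b \<notin> outN V arc x \<union> outN2 V arc x \<and>
     arc y b \<and> a \<notin> outN V arc y \<union> outN2 V arc y)"

definition path_loses :: "'a set \<Rightarrow> ('a \<Rightarrow> 'a \<Rightarrow> bool) \<Rightarrow> 'a \<times> 'a \<times> 'a \<Rightarrow> 'a \<times> 'a \<times> 'a \<Rightarrow> bool" where
  "path_loses V arc p q \<longleftrightarrow> (case p of (a, b, c) \<Rightarrow> case q of (x, y, z) \<Rightarrow>
     (\<forall>e \<in> {{a, b}, {b, c}}. \<forall>f \<in> {{x, y}, {y, z}}. loses V arc e f))"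

definition double_cycle :: "'a set \<Rightarrow> ('a \<Rightarrow> 'a \<Rightarrow> bool) \<Rightarrow> nat \<Rightarrow> (nat \<Rightarrow> 'a \<times> 'a \<times> 'a) \<Rightarrow> bool" where
  "double_cycle V arc k P \<longleftrightarrow> k \<ge> 2 \<and>
     (\<forall>i<k. case P i of (a, b, c) \<Rightarrow> missing_path V arc a b c) \<and>
     inj_on (\<lambda>i. case P i of (a, b, c) \<Rightarrow> {a, b, c}) {..<k} \<and>
     (\<forall>i<k. path_loses V arc (P i) (P (Suc i mod k)))"

definition KC :: "nat \<Rightarrow> (nat \<Rightarrow> 'a \<times> 'a \<times> 'a) \<Rightarrow> 'a set" where
  "KC k P = (\<Union>i<k. case P i of (a, b, c) \<Rightarrow> {a, b, c})"

end

theory Submission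
  imports Defs
begin

definition cnt :: "('a \<Rightarrow> 'a \<Rightarrow> bool) \<Rightarrow> 'a \<Rightarrow> 'a \<Rightarrow> 'a \<Rightarrow> nat" where
  "cnt arc w p q = (if arc p w then 1 else 0) + (if arc q w then 1 else 0)"

lemma cnt2: "cnt arc w p q = 2 \<Longrightarrow> arc p w \<and> arc q w" unfolding cnt_def by (auto split: if_splits)
lemma cnt0: "cnt arc w p q = 0 \<Longrightarrow> \<not> arc p w \<and> \<not> arc q w" unfolding cnt_def by (auto split: if_splits)
lemma cnt1: "cnt arc w p q = 1 \<Longrightarrow> arc p w \<or> arc q w" unfolding cnt_def by (auto split: if_splits)

lemma missing_sym: "missing V arc x y = missing V arc y x"
  unfolding missing_def by auto

lemma adj: "oriented_graph V arc \<Longrightarrow> x\<in>V \<Longrightarrow> y\<in>V \<Longrightarrow> x\<noteq>y \<Longrightarrow> \<not> missing V arc x y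
   \<Longrightarrow> arc x y \<or> arc y x"
  unfolding missing_def by auto

lemma key:
  assumes og: "oriented_graph V arc"
    and L: "loses V arc {p,q} {r,s}"
    and mpq: "missing V arc p q" and mrs: "missing V arc r s"
    and cross: "\<And>u v. u\<in>{p,q} \<Longrightarrow> v\<in>{r,s} \<Longrightarrow> \<not> missing V arc u v"
    and wn: "\<And>u. u\<in>{p,q,r,s} \<Longrightarrow> \<not> missing V arc u w"
  shows "cnt arc w p q \<le> cnt arc w r s \<and>
    (cnt arc w p q = 1 \<longrightarrow> cnt arc w r s = 1 \<longrightarrow> (\<forall>u\<in>{p,q}. \<forall>r'\<in>{r,s}. arc u w \<longrightarrow> arc r' w \<longrightarrow>
        arc r' u \<and> (\<forall>v. arc u v \<and> \<not> missing V arc v r' \<longrightarrow> arc r' v)))"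
proof -
  from L obtain x y a b where e: "{p,q} = {x,y}" and f: "{r,s} = {a,b}"
    and xa: "arc x a" and bx: "b \<notin> outN V arc x \<union> outN2 V arc x"
    and yb: "arc y b" and ay: "a \<notin> outN V arc y \<union> outN2 V arc y"
    unfolding loses_def by blast
  have og1: "\<And>u v. arc u v \<Longrightarrow> u \<in> V \<and> v \<in> V" and og2: "\<And>u v. arc u v \<Longrightarrow> \<not> arc v u"
    using og unfolding oriented_graph_def by auto
  have mxy: "missing V arc x y" using mpq e by (metis doubleton_eq_iff missing_sym)
  have mab: "missing V arc a b" using mrs f by (metis doubleton_eq_iff missing_sym)
  have xyne: "x\<noteq>y" and abne: "a\<noteq>b" using mxy mab unfolding missing_def by auto
  have bneqx: "b \<noteq> x" using yb mxy unfolding missing_def by auto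
  have aneqy: "a \<noteq> y" using xa mxy unfolding missing_def by auto
  have PX: "arc b v" if xv: "arc x v" and nm: "\<not> missing V arc v b" for v
  proof (rule ccontr)
    assume nbv: "\<not> arc b v"
    have vV: "v \<in> V" and bV: "b\<in>V" using og1 xv yb by auto
    have "v \<noteq> b" using xv bx bV unfolding outN_def by auto
    hence "arc v b" using adj[OF og vV bV] nm nbv by auto
    hence "b \<in> outN2 V arc x" using bV bx bneqx xv vV unfolding outN2_def outN_def by auto
    thus False using bx by auto
  qed
  have PY: "arc a v" if yv: "arc y v" and nm: "\<not> missing V arc v a" for v
  proof (rule ccontr)
    assume nav: "\<not> arc a v"
    have vV: "v \<in> V" and aV: "a\<in>V" using og1 yv xa by auto
    have "v \<noteq> a" using yv ay aV unfolding outN_def by auto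
    hence "arc v a" using adj[OF og vV aV] nm nav by auto
    hence "a \<in> outN2 V arc y" using aV ay aneqy yv vV unfolding outN2_def outN_def by auto
    thus False using ay by auto
  qed
  have xin: "x \<in> {p,q}" "y \<in> {p,q}" using e by auto
  have ain: "a \<in> {r,s}" "b \<in> {r,s}" using f by auto
  have bx': "arc b x"
  proof -
    have "x \<in> V" "b \<in> V" using og1 xa yb by auto
    moreover have "\<not> arc x b" using bx og1 yb unfolding outN_def by auto
    moreover have "\<not> missing V arc x b" using cross xin ain by auto
    ultimately show ?thesis using adj[OF og, of x b] bneqx by auto
  qed
  have ay': "arc a y"
  proof -
    have "y \<in> V" "a \<in> V" using og1 xa yb by auto
    moreover have "\<not> arc y a" using ay og1 xa unfolding outN_def by auto
    moreover have "\<not> missing V arc y a" using cross xin ain by auto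
    ultimately show ?thesis using adj[OF og, of y a] aneqy by auto
  qed
  have gx: "arc x w \<Longrightarrow> arc b w" using PX[of w] wn[of b] ain missing_sym[of V arc w b] by auto
  have gy: "arc y w \<Longrightarrow> arc a w" using PY[of w] wn[of a] ain missing_sym[of V arc w a] by auto
  have c1: "cnt arc w p q = cnt arc w x y" using e unfolding cnt_def doubleton_eq_iff by auto
  have c2: "cnt arc w r s = cnt arc w a b" using f unfolding cnt_def doubleton_eq_iff by auto
  have A0: "cnt arc w x y \<le> cnt arc w a b" unfolding cnt_def using gx gy by auto
  have A: "cnt arc w p q \<le> cnt arc w r s" using A0 c1 c2 by simp
  have B: "arc r' u \<and> (\<forall>v. arc u v \<and> \<not> missing V arc v r' \<longrightarrow> arc r' v)"
    if h1: "cnt arc w p q = 1" and h2: "cnt arc w r s = 1" and u: "u\<in>{p,q}" and r: "r'\<in>{r,s}"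
      and gu: "arc u w" and gr: "arc r' w" for u r'
  proof -
    have u': "u = x \<or> u = y" using u e by auto
    have r'': "r' = a \<or> r' = b" using r f by auto
    have h2': "cnt arc w a b = 1" using h2 c2 by simp
    show ?thesis
    proof (cases "u = x")
      case True
      hence "arc b w" using gx gu by simp
      hence "r' = b" using r'' gr h2' abne unfolding cnt_def by auto
      thus ?thesis using True bx' PX by auto
    next
      case False
      hence uy: "u = y" using u' by auto
      hence "arc a w" using gy gu by simp
      hence "r' = a" using r'' gr h2' abne unfolding cnt_def by auto
      thus ?thesis using uy ay' PY by auto
    qed
  qed
  show ?thesis using A B by blast
qed

lemma cyc_const:
  fixes f :: "nat \<Rightarrow> nat"
  assumes k: "k>0" and h: "\<forall>i<k. f i \<le> f (Suc i mod k)"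
  shows "\<forall>i<k. f i = f 0"
proof -
  have step: "f j \<le> f (Suc j)" if "Suc j < k" for j
  proof -
    have "j < k" using that by simp
    hence "f j \<le> f (Suc j mod k)" using h by blast
    moreover have "Suc j mod k = Suc j" using that by simp
    ultimately show ?thesis by simp
  qed
  have up: "i \<le> j \<Longrightarrow> j < k \<Longrightarrow> f i \<le> f j" for i j
  proof (induction j)
    case 0 then show ?case by simp
  next
    case (Suc j)
    show ?case
    proof (cases "i = Suc j")
      case True then show ?thesis by simp
    next
      case False
      hence "f i \<le> f j" using Suc by simp
      moreover have "f j \<le> f (Suc j)" using step Suc.prems by simp
      ultimately show ?thesis by (rule order_trans)
    qed
  qed
  have last: "f (k-1) \<le> f 0"
  proof -
    have "k - 1 < k" using k by simp
    hence "f (k-1) \<le> f (Suc (k-1) mod k)" using h by blast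
    moreover have "Suc (k-1) mod k = 0" using k by simp
    ultimately show ?thesis by simp
  qed
  show ?thesis
  proof (intro allI impI)
    fix i assume i: "i < k"
    have "f i \<le> f (k-1)" using up[of i "k-1"] i by simp
    moreover have "f 0 \<le> f i" using up[of 0 i] i by simp
    ultimately show "f i = f 0" using last by simp
  qed
qed

lemma closure:
  assumes "missing_path V arc a b c" "u\<in>{a,b,c}" "missing V arc u v"
  shows "v\<in>{a,b,c}"
  using assms unfolding missing_path_def by blast

lemma sub:
  assumes m1: "missing_path V arc a b c" and m2: "missing_path V arc x y z"
    and v1: "v\<in>{a,b,c}" and v2: "v\<in>{x,y,z}"
  shows "{a,b,c} \<subseteq> {x,y,z}"
proof -
  have mab: "missing V arc a b" and mbc: "missing V arc b c" using m1 unfolding missing_path_def by auto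
  have bin: "b \<in> {x,y,z}"
  proof (cases "v = b")
    case True then show ?thesis using v2 by simp
  next
    case False
    hence "v = a \<or> v = c" using v1 by auto
    hence "missing V arc v b" using mab mbc missing_sym by metis
    thus ?thesis using closure[OF m2 v2] by blast
  qed
  have "a \<in> {x,y,z}" using closure[OF m2 bin, of a] mab missing_sym by metis
  moreover have "c \<in> {x,y,z}" using closure[OF m2 bin, of c] mbc by blast
  ultimately show ?thesis using bin by blast
qed

lemma split3: "(case p of (a, b, c) \<Rightarrow> f a b c) = f (fst p) (fst (snd p)) (snd (snd p))"
  by (cases p) auto

theorem proposition4p15:
  fixes V :: "'a set" and arc :: "'a \<Rightarrow> 'a \<Rightarrow> bool"
    and k :: nat and P :: "nat \<Rightarrow> 'a \<times> 'a \<times> 'a"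
  assumes "tournament_missing_P2 V arc"
    and "double_cycle V arc k P"
  shows "\<forall>u \<in> KC k P. \<forall>v \<in> KC k P.
           outN V arc u - KC k P = outN V arc v - KC k P \<and>
           inN V arc u - KC k P = inN V arc v - KC k P"
proof -
  have og: "oriented_graph V arc" using assms(1) unfolding tournament_missing_P2_def by auto
  have og1: "\<And>u v. arc u v \<Longrightarrow> u \<in> V \<and> v \<in> V" and og2: "\<And>u v. arc u v \<Longrightarrow> \<not> arc v u"
    using og unfolding oriented_graph_def by auto
  define A where "A i = fst (P i)" for i
  define B where "B i = fst (snd (P i))" for i
  define C where "C i = snd (snd (P i))" for i
  define vs where "vs i = {A i, B i, C i}" for i
  have k2: "k \<ge> 2" using assms(2) unfolding double_cycle_def by auto
  have mp: "\<And>i. i<k \<Longrightarrow> missing_path V arc (A i) (B i) (C i)"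
    using assms(2) unfolding double_cycle_def A_def B_def C_def by (auto simp: split3)
  have inj: "inj_on vs {..<k}"
    using assms(2) unfolding double_cycle_def A_def B_def C_def vs_def by (auto simp: split3)
  have pl: "\<And>i. i<k \<Longrightarrow> path_loses V arc (P i) (P (Suc i mod k))"
    using assms(2) unfolding double_cycle_def by auto
  have KCeq: "KC k P = (\<Union>i<k. vs i)"
    unfolding KC_def vs_def A_def B_def C_def by (simp add: split3)
  have k0: "0 < k" using k2 by simp
  have jlt: "\<And>i. i<k \<Longrightarrow> Suc i mod k < k" using k2 by auto
  have jne: "\<And>i. i<k \<Longrightarrow> Suc i mod k \<noteq> i"
  proof -
    fix i assume i: "i<k"
    show "Suc i mod k \<noteq> i"
    proof (cases "Suc i < k")
      case True then show ?thesis by simp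
    next
      case False
      hence "Suc i = k" using i by auto
      thus ?thesis using k2 by auto
    qed
  qed
  have los: "\<And>i e f. i<k \<Longrightarrow> e \<in> {{A i, B i}, {B i, C i}} \<Longrightarrow>
      f \<in> {{A (Suc i mod k), B (Suc i mod k)}, {B (Suc i mod k), C (Suc i mod k)}} \<Longrightarrow> loses V arc e f"
  proof -
    fix i e f assume i: "i<k" and e: "e \<in> {{A i, B i}, {B i, C i}}"
      and f: "f \<in> {{A (Suc i mod k), B (Suc i mod k)}, {B (Suc i mod k), C (Suc i mod k)}}"
    have "path_loses V arc (P i) (P (Suc i mod k))" using pl i .
    thus "loses V arc e f" using e f unfolding path_loses_def A_def B_def C_def split3 by blast
  qed
  have mAB: "\<And>i. i<k \<Longrightarrow> missing V arc (A i) (B i)" and mBC: "\<And>i. i<k \<Longrightarrow> missing V arc (B i) (C i)"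
    using mp unfolding missing_path_def by auto
  have cross: "\<And>i j u v. i<k \<Longrightarrow> j<k \<Longrightarrow> i\<noteq>j \<Longrightarrow> u\<in>vs i \<Longrightarrow> v\<in>vs j \<Longrightarrow> \<not> missing V arc u v"
  proof
    fix i j u v assume i: "i<k" and j: "j<k" and ij: "i\<noteq>j" and u: "u\<in>vs i" and v: "v\<in>vs j"
      and m: "missing V arc u v"
    have "v \<in> vs i" using closure[OF mp[OF i] _ m] u unfolding vs_def by auto
    hence "vs i \<subseteq> vs j" "vs j \<subseteq> vs i" using sub[OF mp[OF i] mp[OF j]] sub[OF mp[OF j] mp[OF i]] v
      unfolding vs_def by blast+
    hence "vs i = vs j" by blast
    thus False using inj i j ij unfolding inj_on_def by auto
  qed
  have KV: "KC k P \<subseteq> V"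
    unfolding KCeq vs_def using mp unfolding missing_path_def missing_def by auto
  have const: "(\<forall>u\<in>KC k P. arc u w) \<or> (\<forall>u\<in>KC k P. \<not> arc u w)" if wV: "w\<in>V" and wK: "w \<notin> KC k P" for w
  proof -
    have wn: "\<And>i u. i<k \<Longrightarrow> u \<in> vs i \<Longrightarrow> \<not> missing V arc u w"
    proof
      fix i u assume i: "i<k" and u: "u \<in> vs i" and m: "missing V arc u w"
      have "w \<in> vs i" using closure[OF mp[OF i] _ m] u unfolding vs_def by auto
      thus False using wK i unfolding KCeq by auto
    qed
    have KEY: "cnt arc w p q \<le> cnt arc w r s \<and>
      (cnt arc w p q = 1 \<longrightarrow> cnt arc w r s = 1 \<longrightarrow> (\<forall>u\<in>{p,q}. \<forall>r'\<in>{r,s}. arc u w \<longrightarrow> arc r' w \<longrightarrow>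
        arc r' u \<and> (\<forall>v. arc u v \<and> \<not> missing V arc v r' \<longrightarrow> arc r' v)))"
      if i: "i<k" and e: "{p,q} \<in> {{A i, B i}, {B i, C i}}"
        and f: "{r,s} \<in> {{A (Suc i mod k), B (Suc i mod k)}, {B (Suc i mod k), C (Suc i mod k)}}"
        and mpq: "missing V arc p q" and mrs: "missing V arc r s" for i p q r s
    proof (rule key[OF og los[OF i e f] mpq mrs])
      have pq: "{p,q} \<subseteq> vs i" using e unfolding vs_def by auto
      have rs: "{r,s} \<subseteq> vs (Suc i mod k)" using f unfolding vs_def by auto
      show "\<And>u v. u \<in> {p, q} \<Longrightarrow> v \<in> {r, s} \<Longrightarrow> \<not> missing V arc u v"
        using cross[OF i jlt[OF i] jne[OF i, symmetric]] pq rs by blast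
      show "\<And>u. u \<in> {p, q, r, s} \<Longrightarrow> \<not> missing V arc u w"
        using wn[OF i] wn[OF jlt[OF i]] pq rs by blast
    qed
    define cA where "cA i = cnt arc w (A i) (B i)" for i
    define cB where "cB i = cnt arc w (B i) (C i)" for i
    have ineq: "cA i \<le> cA (Suc i mod k) \<and> cA i \<le> cB (Suc i mod k) \<and> cB i \<le> cA (Suc i mod k) \<and> cB i \<le> cB (Suc i mod k)"
      if i: "i<k" for i
    proof -
      let ?j = "Suc i mod k"
      have j: "?j < k" using jlt[OF i] .
      have a1: "cA i \<le> cA ?j" unfolding cA_def
        by (rule KEY[OF i _ _ mAB[OF i] mAB[OF j], THEN conjunct1]) auto
      have a2: "cA i \<le> cB ?j" unfolding cA_def cB_def
        by (rule KEY[OF i _ _ mAB[OF i] mBC[OF j], THEN conjunct1]) auto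
      have a3: "cB i \<le> cA ?j" unfolding cA_def cB_def
        by (rule KEY[OF i _ _ mBC[OF i] mAB[OF j], THEN conjunct1]) auto
      have a4: "cB i \<le> cB ?j" unfolding cB_def
        by (rule KEY[OF i _ _ mBC[OF i] mBC[OF j], THEN conjunct1]) auto
      show ?thesis using a1 a2 a3 a4 by blast
    qed
    have n0: "\<forall>i<k. cA i + cB i = cA 0 + cB 0"
    proof -
      have "\<forall>i<k. cA i + cB i \<le> cA (Suc i mod k) + cB (Suc i mod k)"
      proof (intro allI impI)
        fix i assume "i<k"
        thus "cA i + cB i \<le> cA (Suc i mod k) + cB (Suc i mod k)" using ineq[of i] by linarith
      qed
      from cyc_const[of k "\<lambda>i. cA i + cB i", OF k0 this] show ?thesis by blast
    qed
    have eqs: "cA i = cB i \<and> cA i = cA (Suc i mod k)" if i: "i<k" for i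
    proof -
      have "cA i + cB i = cA (Suc i mod k) + cB (Suc i mod k)" using n0 i jlt[OF i] by metis
      thus ?thesis using ineq[OF i] by linarith
    qed
    have cA0: "\<forall>i<k. cA i = cA 0"
    proof -
      have "\<forall>i<k. cA i \<le> cA (Suc i mod k)"
      proof (intro allI impI)
        fix i assume "i<k"
        thus "cA i \<le> cA (Suc i mod k)" using eqs[of i] by linarith
      qed
      from cyc_const[of k cA, OF k0 this] show ?thesis by blast
    qed
    define t where "t = cA 0"
    have tA: "\<And>i. i<k \<Longrightarrow> cA i = t" using cA0 unfolding t_def by blast
    have tB: "\<And>i. i<k \<Longrightarrow> cB i = t"
    proof -
      fix i assume i: "i<k"
      have "cA i = cB i" using eqs[OF i] by blast
      thus "cB i = t" using tA[OF i] by simp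
    qed
    have t2: "t \<le> 2" unfolding t_def cA_def cnt_def by auto
    have inK: "\<And>u. u \<in> KC k P \<Longrightarrow> \<exists>i<k. u = A i \<or> u = B i \<or> u = C i"
      unfolding KCeq vs_def by auto
    consider (z) "t = 0" | (two) "t = 2" | (one) "t = 1" using t2 by linarith
    then show ?thesis
    proof cases
      case z
      have "\<forall>u\<in>KC k P. \<not> arc u w"
      proof
        fix u assume "u \<in> KC k P"
        then obtain i where i: "i<k" and u: "u = A i \<or> u = B i \<or> u = C i" using inK by blast
        have h: "cnt arc w (A i) (B i) = 0" "cnt arc w (B i) (C i) = 0"
        proof -
          have "cA i = 0" "cB i = 0" using tA[OF i] tB[OF i] z by simp_all
          thus "cnt arc w (A i) (B i) = 0" "cnt arc w (B i) (C i) = 0" unfolding cA_def cB_def by simp_all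
        qed
        have "\<not> arc (A i) w \<and> \<not> arc (B i) w \<and> \<not> arc (C i) w" using cnt0[OF h(1)] cnt0[OF h(2)] by blast
        then show "\<not> arc u w" using u by blast
      qed
      thus ?thesis by blast
    next
      case two
      have "\<forall>u\<in>KC k P. arc u w"
      proof
        fix u assume "u \<in> KC k P"
        then obtain i where i: "i<k" and u: "u = A i \<or> u = B i \<or> u = C i" using inK by blast
        have h: "cnt arc w (A i) (B i) = 2" "cnt arc w (B i) (C i) = 2"
        proof -
          have "cA i = 2" "cB i = 2" using tA[OF i] tB[OF i] two by simp_all
          thus "cnt arc w (A i) (B i) = 2" "cnt arc w (B i) (C i) = 2" unfolding cA_def cB_def by simp_all
        qed
        have "arc (A i) w \<and> arc (B i) w \<and> arc (C i) w" using cnt2[OF h(1)] cnt2[OF h(2)] by blast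
        then show "arc u w" using u by blast
      qed
      thus ?thesis by blast
    next
      case one
      define s where "s i = (if arc (B i) w then B i else A i)" for i
      have sg: "arc (s i) w \<and> s i \<in> {A i, B i} \<and> s i \<in> vs i" if i: "i<k" for i
      proof -
        have c: "cnt arc w (A i) (B i) = 1" using tA[OF i] one unfolding cA_def by simp
        then have "arc (A i) w \<or> arc (B i) w" by (rule cnt1)
        then show ?thesis unfolding s_def vs_def by auto
      qed
      have R: "arc (s (Suc i mod k)) (s i) \<and>
          (\<forall>v. arc (s i) v \<and> \<not> missing V arc v (s (Suc i mod k)) \<longrightarrow> arc (s (Suc i mod k)) v)"
        if i: "i<k" for i
      proof -
        let ?j = "Suc i mod k"
        have j: "?j < k" using jlt[OF i] .
        have K2: "\<forall>u\<in>{A i, B i}. \<forall>r'\<in>{A ?j, B ?j}. arc u w \<longrightarrow> arc r' w \<longrightarrow>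
          arc r' u \<and> (\<forall>v. arc u v \<and> \<not> missing V arc v r' \<longrightarrow> arc r' v)"
        proof -
          have "cnt arc w (A i) (B i) = 1" "cnt arc w (A ?j) (B ?j) = 1"
            using tA[OF i] tA[OF j] one unfolding cA_def by auto
          moreover have "cnt arc w (A i) (B i) = 1 \<longrightarrow> cnt arc w (A ?j) (B ?j) = 1 \<longrightarrow>
            (\<forall>u\<in>{A i, B i}. \<forall>r'\<in>{A ?j, B ?j}. arc u w \<longrightarrow> arc r' w \<longrightarrow>
          arc r' u \<and> (\<forall>v. arc u v \<and> \<not> missing V arc v r' \<longrightarrow> arc r' v))"
            by (rule KEY[OF i _ _ mAB[OF i] mAB[OF j], THEN conjunct2]) auto
          ultimately show ?thesis by blast
        qed
        have s1: "s i \<in> {A i, B i}" "arc (s i) w" using sg[OF i] by auto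
        have s2: "s ?j \<in> {A ?j, B ?j}" "arc (s ?j) w" using sg[OF j] by auto
        show ?thesis using K2 s1 s2 by blast
      qed
      have ch: "1 \<le> m \<longrightarrow> m < k \<longrightarrow> arc (s m) (s 0)" for m
      proof (induction m)
        case 0 then show ?case by simp
      next
        case (Suc m)
        show ?case
        proof (cases "m = 0")
          case True
          then show ?thesis using R[of 0] k2 by simp
        next
          case False
          show ?thesis
          proof (intro impI)
            assume "Suc m < k"
            hence m: "m < k" "Suc m mod k = Suc m" by auto
            have a1: "arc (s m) (s 0)" using Suc.IH False m by auto
            have "\<not> missing V arc (s 0) (s (Suc m))"
              using cross[of 0 "Suc m" "s 0" "s (Suc m)"] sg[of 0] sg[of "Suc m"] \<open>Suc m < k\<close> k2 by auto
            thus "arc (s (Suc m)) (s 0)" using R[OF m(1)] a1 m(2) by auto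
          qed
        qed
      qed
      have "arc (s (k-1)) (s 0)" using ch[of "k-1"] k2 by auto
      moreover have "arc (s 0) (s (k-1))"
      proof -
        have km: "k - 1 < k" "Suc (k-1) mod k = 0" using k2 by auto
        show ?thesis using R[OF km(1)] km(2) by simp
      qed
      ultimately show ?thesis using og2 by blast
    qed
  qed
  show ?thesis
  proof (intro ballI conjI)
    fix u v assume u: "u \<in> KC k P" and v: "v \<in> KC k P"
    have uV: "u\<in>V" and vV: "v\<in>V" using u v KV by auto
    have nm: "\<And>x w. x \<in> KC k P \<Longrightarrow> w \<notin> KC k P \<Longrightarrow> \<not> missing V arc x w"
    proof
      fix x w assume x: "x \<in> KC k P" and w: "w \<notin> KC k P" and m: "missing V arc x w"
      obtain i where i: "i<k" and xi: "x \<in> vs i" using x unfolding KCeq by auto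
      have "w \<in> vs i" using closure[OF mp[OF i] _ m] xi unfolding vs_def by auto
      thus False using w i unfolding KCeq by auto
    qed
    have flip: "\<And>x w. x \<in> KC k P \<Longrightarrow> w \<in> V \<Longrightarrow> w \<notin> KC k P \<Longrightarrow> arc w x \<longleftrightarrow> \<not> arc x w"
    proof -
      fix x w assume x: "x \<in> KC k P" and wV: "w \<in> V" and w: "w \<notin> KC k P"
      have "x \<in> V" "x \<noteq> w" using x KV w by auto
      thus "arc w x \<longleftrightarrow> \<not> arc x w" using adj[OF og, of x w] nm[OF x w] wV og2 by blast
    qed
    have sameO: "arc a x \<Longrightarrow> arc b x" if a: "a \<in> KC k P" and b: "b \<in> KC k P"
      and xV: "x \<in> V" and xK: "x \<notin> KC k P" for a b x
    proof -
      assume "arc a x"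
      have "(\<forall>u\<in>KC k P. arc u x) \<or> (\<forall>u\<in>KC k P. \<not> arc u x)" by (rule const[OF xV xK])
      thus "arc b x" using a b \<open>arc a x\<close> by blast
    qed
    have sameI: "arc x a \<Longrightarrow> arc x b" if a: "a \<in> KC k P" and b: "b \<in> KC k P"
      and xV: "x \<in> V" and xK: "x \<notin> KC k P" for a b x
    proof -
      assume "arc x a"
      hence "\<not> arc a x" using flip[OF a xV xK] by simp
      hence "\<not> arc b x" using sameO[OF b a xV xK] by blast
      thus "arc x b" using flip[OF b xV xK] by simp
    qed
    show "outN V arc u - KC k P = outN V arc v - KC k P"
      unfolding outN_def using sameO[OF u v] sameO[OF v u] by auto
    show "inN V arc u - KC k P = inN V arc v - KC k P"
      unfolding inN_def using sameI[OF u v] sameI[OF v u] by auto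
  qed
qed

end
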